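(* Assume the setting in the context. There are universal constants $C_1,C_2>0$ (independent of $B,R,d,n,\delta$) such that for every $\delta\in(0,1)$, with probability at least $1-\delta$ over the sample, every $w\in\mathbb R^d$ with $\|w\|_2\le R$ and $\nabla\widehat L(w)=0$ satisfies $$\|w-w_\star\|_2\le \frac{C_1B}{\gamma^2\lambda}\sqrt{\frac{d\,(C_2+\log(nBR))+\log(1/\delta)}{n}}.$$
   Context: Generalized linear model: pairs $(x,y)$ are drawn from a distribution $D$ on $\mathbb R^d\times\mathbb R$ where $x\sim D_x$ and $y=\sigma(w_\star^\top x)+\epsilon$, with $\epsilon$ a mean-zero noise independent of $x$, $\sigma:\mathbb R\to\mathbb R$ a known function and $w_\star\in\mathbb R^d$ unknown. Assumptions: (1) $D_x$ is supported in $\{x:\|x\|_2\le B\}$ and $\mathbb E[xx^\top]\succeq \lambda I$ for some $\lambda>0$; (2) $\|w_\star\|_2\le R$ and $BR\ge1$; (3) $\sigma$ is strictly increasing, twice differentiable, $\sigma(t)\in[0,1]$, $\sup_t\max(|\sigma'(t)|,|\sigma''(t)|)\le1$, and $\inf_{t\in[-BR,BR]}\sigma'(t)\ge\gamma>0$; (4) $|\epsilon|\le1$ almost surely. Given i.i.d. samples $(x_i,y_i)_{i=1}^n\sim D$, the empirical risk is $\widehat L(w)=\frac1{2n}\sum_{i=1}^n(y_i-\sigma(w^\top x_i))^2$. *)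

theory Defs
  imports "HOL-Probability.Probability"
begin

text \<open>Vectors of R^d are represented as functions nat => real; only the
coordinates 0..d-1 matter.  The measurable space of covariates is the
finite product space PiM {..<d} (borel).\<close>

definition dotp :: "nat \<Rightarrow> (nat \<Rightarrow> real) \<Rightarrow> (nat \<Rightarrow> real) \<Rightarrow> real" where
  "dotp d w x = (\<Sum>i<d. w i * x i)"

definition vec_space :: "nat \<Rightarrow> (nat \<Rightarrow> real) measure" where
  "vec_space d = Pi\<^sub>M {..<d} (\<lambda>_. borel)"

definition link_ok :: "(real \<Rightarrow> real) \<Rightarrow> real \<Rightarrow> real \<Rightarrow> real \<Rightarrow> bool" where
  "link_ok \<sigma> B R \<gamma> \<longleftrightarrow> strict_mono \<sigma> \<and> (\<forall>t. 0 \<le> \<sigma> t \<and> \<sigma> t \<le> 1) \<and> \<gamma> > 0 \<and>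
     (\<exists>\<sigma>1 \<sigma>2. (\<forall>t. (\<sigma> has_real_derivative \<sigma>1 t) (at t)) \<and>
               (\<forall>t. (\<sigma>1 has_real_derivative \<sigma>2 t) (at t)) \<and>
               (\<forall>t. \<bar>\<sigma>1 t\<bar> \<le> 1 \<and> \<bar>\<sigma>2 t\<bar> \<le> 1) \<and>
               (\<forall>t\<in>{-(B*R)..B*R}. \<sigma>1 t \<ge> \<gamma>))"

definition covariates_ok :: "nat \<Rightarrow> real \<Rightarrow> real \<Rightarrow> (nat \<Rightarrow> real) measure \<Rightarrow> bool" where
  "covariates_ok d B lam Dx \<longleftrightarrow> prob_space Dx \<and> sets Dx = sets (vec_space d) \<and> lam > 0 \<and>
     (AE x in Dx. L2_set x {..<d} \<le> B) \<and>
     (\<forall>v. (\<integral>x. (dotp d v x)\<^sup>2 \<partial>Dx) \<ge> lam * (\<Sum>i<d. (v i)\<^sup>2))"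

definition noise_ok :: "real measure \<Rightarrow> bool" where
  "noise_ok Ne \<longleftrightarrow> prob_space Ne \<and> sets Ne = sets borel \<and>
     (AE e in Ne. \<bar>e\<bar> \<le> 1) \<and> (\<integral>e. e \<partial>Ne) = 0"

definition glm_dist :: "nat \<Rightarrow> (real \<Rightarrow> real) \<Rightarrow> (nat \<Rightarrow> real) \<Rightarrow> (nat \<Rightarrow> real) measure
     \<Rightarrow> real measure \<Rightarrow> ((nat \<Rightarrow> real) \<times> real) measure" where
  "glm_dist d \<sigma> wstar Dx Ne =
     distr (Dx \<Otimes>\<^sub>M Ne) (vec_space d \<Otimes>\<^sub>M borel) (\<lambda>(x, e). (x, \<sigma> (dotp d wstar x) + e))"

definition sample_measure :: "nat \<Rightarrow> ((nat \<Rightarrow> real) \<times> real) measure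
     \<Rightarrow> (nat \<Rightarrow> (nat \<Rightarrow> real) \<times> real) measure" where
  "sample_measure n D = Pi\<^sub>M {..<n} (\<lambda>_. D)"

definition emp_risk :: "nat \<Rightarrow> nat \<Rightarrow> (real \<Rightarrow> real) \<Rightarrow> (nat \<Rightarrow> (nat \<Rightarrow> real) \<times> real)
     \<Rightarrow> (nat \<Rightarrow> real) \<Rightarrow> real" where
  "emp_risk d n \<sigma> S w = (1 / (2 * real n)) * (\<Sum>i<n. (snd (S i) - \<sigma> (dotp d w (fst (S i))))\<^sup>2)"

definition grad_zero :: "nat \<Rightarrow> ((nat \<Rightarrow> real) \<Rightarrow> real) \<Rightarrow> (nat \<Rightarrow> real) \<Rightarrow> bool" where
  "grad_zero d L w \<longleftrightarrow>
     (\<forall>j<d. ((\<lambda>t. L (w(j := w j + t))) has_real_derivative 0) (at 0))"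

end

theory Submission
  imports Defs
begin

abbreviation nrm :: "nat \<Rightarrow> (nat \<Rightarrow> real) \<Rightarrow> real" where
  "nrm d w \<equiv> L2_set w {..<d}"

lemma dotp_cs: "\<bar>dotp d w x\<bar> \<le> nrm d w * nrm d x"
proof -
  have "\<bar>dotp d w x\<bar> \<le> (\<Sum>i<d. \<bar>w i\<bar> * \<bar>x i\<bar>)"
    unfolding dotp_def by (rule order_trans[OF sum_abs]) (simp add: abs_mult)
  also have "\<dots> \<le> nrm d w * nrm d x" by (rule L2_set_mult_ineq)
  finally show ?thesis .
qed

lemma dotp_diff: "dotp d (\<lambda>i. w i - v i) x = dotp d w x - dotp d v x"
  unfolding dotp_def by (simp add: left_diff_distrib sum_subtractf)

lemma dotp_upd: "j < d \<Longrightarrow> dotp d (w(j := w j + t)) x = dotp d w x + t * x j"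
proof -
  assume j: "j < d"
  have "dotp d (w(j := w j + t)) x = (\<Sum>i<d. w i * x i + (if i = j then t * x i else 0))"
    unfolding dotp_def by (intro sum.cong) (auto simp: algebra_simps)
  also have "\<dots> = dotp d w x + t * x j"
    using j by (simp add: sum.distrib dotp_def)
  finally show ?thesis .
qed

lemma dotp_self: "dotp d w w = (nrm d w)\<^sup>2"
  unfolding dotp_def L2_set_def by (simp add: sum_nonneg power2_eq_square)

lemma nrm_diff_le: "nrm d (\<lambda>i. w i - v i) \<le> nrm d w + nrm d v"
proof -
  have "nrm d (\<lambda>i. w i + (- v i)) \<le> nrm d w + nrm d (\<lambda>i. - v i)"
    by (rule L2_set_triangle_ineq)
  moreover have "nrm d (\<lambda>i. - v i) = nrm d v" unfolding L2_set_def by simp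
  ultimately show ?thesis by simp
qed

lemma abs_comp_le_nrm: "j < d \<Longrightarrow> \<bar>w j\<bar> \<le> nrm d w"
proof -
  assume "j < d"
  then have "(\<lambda>i. \<bar>w i\<bar>) j \<le> L2_set (\<lambda>i. \<bar>w i\<bar>) {..<d}"
    by (intro member_le_L2_set) auto
  moreover have "L2_set (\<lambda>i. \<bar>w i\<bar>) {..<d} = nrm d w" unfolding L2_set_def by simp
  ultimately show ?thesis by simp
qed

lemma nrm_le_const:
  assumes "\<And>j. j < d \<Longrightarrow> \<bar>f j\<bar> \<le> c"
  shows "nrm d f \<le> c * sqrt d"
proof -
  have c: "0 \<le> c" if "d > 0" using assms[of 0] that by simp
  show ?thesis
  proof (cases "d = 0")
    case True then show ?thesis by simp
  next
    case False
    have "nrm d f = L2_set (\<lambda>i. \<bar>f i\<bar>) {..<d}" unfolding L2_set_def by simp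
    also have "\<dots> \<le> L2_set (\<lambda>i. c) {..<d}"
      by (rule L2_set_mono) (use assms in auto)
    also have "\<dots> = c * sqrt d" using c False by (simp add: L2_set_constant)
    finally show ?thesis .
  qed
qed

lemma dotp_nrm_le: "dotp d v p \<le> nrm d v * nrm d p"
  using dotp_cs[of d v p] by simp

lemma nrm_scale: "c \<ge> 0 \<Longrightarrow> nrm d (\<lambda>i. f i * c) = nrm d f * c"
  by (simp add: L2_set_left_distrib)

lemma lip_from_deriv:
  fixes f f' :: "real \<Rightarrow> real"
  assumes "\<And>t. (f has_real_derivative f' t) (at t)" "\<And>t. \<bar>f' t\<bar> \<le> L"
  shows "\<bar>f a - f b\<bar> \<le> L * \<bar>a - b\<bar>"
proof -
  have *: "\<bar>f b' - f a'\<bar> \<le> L * \<bar>b' - a'\<bar>" if "a' < b'" for a' b'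
  proof -
    obtain z where "f b' - f a' = (b' - a') * f' z"
      using MVT2[of a' b' f f'] \<open>a' < b'\<close> assms(1) by blast
    then have "\<bar>f b' - f a'\<bar> = \<bar>b' - a'\<bar> * \<bar>f' z\<bar>" by (simp add: abs_mult)
    also have "\<dots> \<le> \<bar>b' - a'\<bar> * L" by (intro mult_left_mono assms(2)) auto
    finally show ?thesis by (simp add: mult.commute)
  qed
  consider "a < b" | "a = b" | "b < a" by linarith
  then show ?thesis
  proof cases
    case 1 then show ?thesis using *[OF 1] by (simp add: abs_minus_commute)
  next
    case 2 then show ?thesis by simp
  next
    case 3 then show ?thesis using *[OF 3] by simp
  qed
qed


definition grid :: "real \<Rightarrow> nat \<Rightarrow> nat \<Rightarrow> (nat \<Rightarrow> real) set" where
  "grid h M d = PiE {..<d} (\<lambda>_. (\<lambda>k::int. h * of_int k) ` {-int M..int M})"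

lemma grid_finite: "finite (grid h M d)"
  unfolding grid_def by (intro finite_PiE) auto

lemma grid_card: "card (grid h M d) \<le> (2*M+1)^d"
proof -
  have "card (grid h M d) = (\<Prod>i<d. card ((\<lambda>k::int. h * of_int k) ` {-int M..int M}))"
    unfolding grid_def by (simp add: card_PiE)
  also have "\<dots> \<le> (\<Prod>i<d. 2*M+1)"
  proof (intro prod_mono conjI)
    fix i
    have "card ((\<lambda>k::int. h * of_int k) ` {-int M..int M}) \<le> card {-int M..int M}"
      by (rule card_image_le) auto
    also have "\<dots> = 2*M+1" by simp
    finally show "card ((\<lambda>k::int. h * of_int k) ` {-int M..int M}) \<le> 2*M+1" .
  qed auto
  also have "\<dots> = (2*M+1)^d" by simp
  finally show ?thesis .
qed

lemma grid_round:
  assumes h: "h > 0" and v: "\<And>j. j < d \<Longrightarrow> \<bar>v j\<bar> \<le> h * M"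
  shows "\<exists>g\<in>grid h M d. \<forall>j<d. \<bar>v j - g j\<bar> \<le> h / 2"
proof -
  define g where "g = (\<lambda>j. if j < d then h * of_int (round (v j / h)) else undefined)"
  have r: "\<bar>v j / h - of_int (round (v j / h))\<bar> \<le> 1/2" for j
    using of_int_round_abs_le[of "v j / h"] by (simp add: abs_minus_commute)
  have "g j \<in> (\<lambda>k::int. h * of_int k) ` {-int M..int M}" if j: "j \<in> {..<d}" for j
  proof -
    have "\<bar>v j / h\<bar> \<le> M" using v[of j] j h by (auto simp: abs_divide divide_le_eq mult.commute)
    then have "\<bar>of_int (round (v j / h))\<bar> \<le> real M + 1/2" using r[of j] by linarith
    then have "\<bar>round (v j / h)\<bar> \<le> int M" by linarith
    then show "g j \<in> (\<lambda>k::int. h * of_int k) ` {-int M..int M}"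
      using j unfolding g_def by (auto simp: abs_le_iff)
  qed
  moreover have "g \<in> extensional {..<d}" by (auto simp: g_def extensional_def)
  ultimately have "g \<in> grid h M d" unfolding grid_def PiE_iff by blast
  moreover have "\<bar>v j - g j\<bar> \<le> h / 2" if "j < d" for j
  proof -
    have "v j - g j = h * (v j / h - of_int (round (v j / h)))"
      using that h by (simp add: g_def field_simps)
    then have "\<bar>v j - g j\<bar> = h * \<bar>v j / h - of_int (round (v j / h))\<bar>"
      using h by (simp add: abs_mult)
    also have "\<dots> \<le> h * (1/2)" using r[of j] h by (intro mult_left_mono) auto
    finally show ?thesis by simp
  qed
  ultimately show ?thesis by blast
qed

definition phi :: "(real \<Rightarrow> real) \<Rightarrow> (real \<Rightarrow> real) \<Rightarrow> nat \<Rightarrow> (nat \<Rightarrow> real) \<Rightarrow> (nat \<Rightarrow> real)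
    \<Rightarrow> (nat \<Rightarrow> real) \<times> real \<Rightarrow> real" where
  "phi \<sigma> \<sigma>1 d w g z = (\<sigma> (dotp d w (fst z)) - snd z) * \<sigma>1 (dotp d w (fst z)) * dotp d g (fst z)"

locale lnk =
  fixes \<sigma> \<sigma>1 \<sigma>2 :: "real \<Rightarrow> real"
  assumes s01: "\<And>t. 0 \<le> \<sigma> t \<and> \<sigma> t \<le> 1"
  and d1: "\<And>t. (\<sigma> has_real_derivative \<sigma>1 t) (at t)"
  and d2: "\<And>t. (\<sigma>1 has_real_derivative \<sigma>2 t) (at t)"
  and b1: "\<And>t. \<bar>\<sigma>1 t\<bar> \<le> 1"
  and b2: "\<And>t. \<bar>\<sigma>2 t\<bar> \<le> 1"
begin

lemma phi_bound:
  assumes "nrm d (fst z) \<le> B" "-1 \<le> snd z" "snd z \<le> 2"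
  shows "\<bar>phi \<sigma> \<sigma>1 d w g z\<bar> \<le> 2 * B * nrm d g"
proof -
  let ?a = "dotp d w (fst z)"
  have 1: "\<bar>\<sigma> ?a - snd z\<bar> \<le> 2" using s01[of ?a] assms by auto
  have B0: "0 \<le> B" using assms(1) L2_set_nonneg order_trans by blast
  have 2: "\<bar>dotp d g (fst z)\<bar> \<le> nrm d g * B"
    using dotp_cs[of d g "fst z"] assms(1) by (meson L2_set_nonneg mult_left_mono order_trans)
  have "\<bar>phi \<sigma> \<sigma>1 d w g z\<bar> = \<bar>\<sigma> ?a - snd z\<bar> * \<bar>\<sigma>1 ?a\<bar> * \<bar>dotp d g (fst z)\<bar>"
    unfolding phi_def by (simp add: abs_mult)
  also have "\<dots> \<le> 2 * 1 * (nrm d g * B)"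
    by (intro mult_mono 1 2 b1) (auto simp: B0)
  also have "\<dots> = 2 * B * nrm d g" by (simp add: mult_ac)
  finally show ?thesis .
qed

lemma phi_lip:
  assumes "nrm d (fst z) \<le> B" "-1 \<le> snd z" "snd z \<le> 2"
  shows "\<bar>phi \<sigma> \<sigma>1 d w g z - phi \<sigma> \<sigma>1 d w' g z\<bar> \<le> 3 * B\<^sup>2 * nrm d (\<lambda>i. w i - w' i) * nrm d g"
proof -
  define y where "y = snd z"
  define f where "f = (\<lambda>t. (\<sigma> t - y) * \<sigma>1 t)"
  define f' where "f' = (\<lambda>t. \<sigma>1 t * \<sigma>1 t + (\<sigma> t - y) * \<sigma>2 t)"
  have df: "(f has_real_derivative f' t) (at t)" for t
    unfolding f_def f'_def by (auto intro!: derivative_eq_intros d1 d2)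
  have bf: "\<bar>f' t\<bar> \<le> 3" for t
  proof -
    have "\<bar>\<sigma> t - y\<bar> \<le> 2" using s01[of t] assms unfolding y_def by auto
    then have "\<bar>(\<sigma> t - y) * \<sigma>2 t\<bar> \<le> 2 * 1" unfolding abs_mult by (intro mult_mono b2) auto
    moreover have "\<bar>\<sigma>1 t * \<sigma>1 t\<bar> \<le> 1 * 1" unfolding abs_mult by (intro mult_mono b1) auto
    ultimately show ?thesis unfolding f'_def by linarith
  qed
  let ?a = "dotp d w (fst z)" and ?b = "dotp d w' (fst z)"
  have "\<bar>?a - ?b\<bar> \<le> nrm d (\<lambda>i. w i - w' i) * nrm d (fst z)"
    using dotp_cs[of d "\<lambda>i. w i - w' i" "fst z"] by (simp add: dotp_diff)
  also have "\<dots> \<le> nrm d (\<lambda>i. w i - w' i) * B" using assms(1) by (intro mult_left_mono) auto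
  finally have ab: "\<bar>?a - ?b\<bar> \<le> nrm d (\<lambda>i. w i - w' i) * B" .
  have B0: "0 \<le> B" using assms(1) L2_set_nonneg order_trans by blast
  have gx: "\<bar>dotp d g (fst z)\<bar> \<le> nrm d g * B"
    using dotp_cs[of d g "fst z"] assms(1) by (meson L2_set_nonneg mult_left_mono order_trans)
  have "\<bar>phi \<sigma> \<sigma>1 d w g z - phi \<sigma> \<sigma>1 d w' g z\<bar> = \<bar>f ?a - f ?b\<bar> * \<bar>dotp d g (fst z)\<bar>"
    unfolding phi_def f_def y_def by (simp add: abs_mult[symmetric] left_diff_distrib)
  also have "\<dots> \<le> (3 * \<bar>?a - ?b\<bar>) * (nrm d g * B)"
    by (intro mult_mono lip_from_deriv[OF df bf] gx) (auto simp: B0)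
  also have "\<dots> \<le> (3 * (nrm d (\<lambda>i. w i - w' i) * B)) * (nrm d g * B)"
    by (intro mult_right_mono mult_left_mono ab) (auto simp: B0)
  finally show ?thesis by (simp add: power2_eq_square mult_ac)
qed

lemma sigma_mvt_low:
  assumes "\<And>t. t \<in> {-K..K} \<Longrightarrow> \<sigma>1 t \<ge> \<gamma>" "\<gamma> \<ge> 0"
    and "a \<in> {-K..K}" "b \<in> {-K..K}"
  shows "(\<sigma> a - \<sigma> b) * (a - b) \<ge> \<gamma> * (a - b)\<^sup>2"
proof -
  have *: "(\<sigma> q - \<sigma> p) * (q - p) \<ge> \<gamma> * (q - p)\<^sup>2"
    if "p < q" "p \<in> {-K..K}" "q \<in> {-K..K}" for p q
  proof -
    obtain z where z: "p < z" "z < q" "\<sigma> q - \<sigma> p = (q - p) * \<sigma>1 z"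
      using MVT2[of p q \<sigma> \<sigma>1] \<open>p < q\<close> d1 by blast
    have "z \<in> {-K..K}" using z that by auto
    then have "\<sigma>1 z \<ge> \<gamma>" using assms(1) by blast
    then have "(q - p)\<^sup>2 * \<sigma>1 z \<ge> (q - p)\<^sup>2 * \<gamma>" by (intro mult_left_mono) auto
    then show ?thesis using z(3) by (simp add: power2_eq_square mult_ac)
  qed
  consider "a < b" | "a = b" | "b < a" by linarith
  then show ?thesis
  proof cases
    case 1 then show ?thesis using *[OF 1 assms(3,4)] by (simp add: power2_commute algebra_simps)
  next
    case 2 then show ?thesis by simp
  next
    case 3 then show ?thesis using *[OF 3 assms(4,3)] by simp
  qed
qed

lemma sigma_low2:
  assumes "\<And>t. t \<in> {-K..K} \<Longrightarrow> \<sigma>1 t \<ge> \<gamma>" "\<gamma> \<ge> 0"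
    and "a \<in> {-K..K}" "b \<in> {-K..K}"
  shows "(\<sigma> a - \<sigma> b) * \<sigma>1 a * (a - b) \<ge> \<gamma>\<^sup>2 * (a - b)\<^sup>2"
proof -
  have m: "(\<sigma> a - \<sigma> b) * (a - b) \<ge> \<gamma> * (a - b)\<^sup>2" by (rule sigma_mvt_low[OF assms])
  have g: "\<sigma>1 a \<ge> \<gamma>" using assms by blast
  have "\<gamma>\<^sup>2 * (a - b)\<^sup>2 = \<gamma> * (\<gamma> * (a - b)\<^sup>2)" by (simp add: power2_eq_square)
  also have "\<dots> \<le> \<sigma>1 a * ((\<sigma> a - \<sigma> b) * (a - b))"
    by (rule mult_mono[OF g m]) (use assms(2) g in auto)
  finally show ?thesis by (simp add: mult_ac)
qed

lemma gamma_small: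
  assumes "\<And>t. t \<in> {-K..K} \<Longrightarrow> \<sigma>1 t \<ge> \<gamma>" "K > 0"
  shows "2 * K * \<gamma> \<le> 1"
proof -
  obtain z where z: "-K < z" "z < K" "\<sigma> K - \<sigma> (-K) = (K - (-K)) * \<sigma>1 z"
    using MVT2[of "-K" K \<sigma> \<sigma>1] assms(2) d1 by fastforce
  have "\<sigma>1 z \<ge> \<gamma>" using assms(1) z by auto
  then have "2 * K * \<gamma> \<le> 2 * K * \<sigma>1 z" using assms(2) by (intro mult_left_mono) auto
  also have "\<dots> = \<sigma> K - \<sigma> (-K)" using z(3) by simp
  also have "\<dots> \<le> 1" using s01[of K] s01[of "-K"] by linarith
  finally show ?thesis .
qed

lemma grad_formula:
  assumes gz: "grad_zero d (emp_risk d n \<sigma> S) w" and j: "j < d"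
  shows "(\<Sum>i<n. (\<sigma> (dotp d w (fst (S i))) - snd (S i)) * \<sigma>1 (dotp d w (fst (S i))) * fst (S i) j) = 0"
proof -
  define a where "a = (\<lambda>i. dotp d w (fst (S i)))"
  define x where "x = (\<lambda>i. fst (S i) j)"
  define y where "y = (\<lambda>i. snd (S i))"
  have eq: "emp_risk d n \<sigma> S (w(j := w j + t)) =
      (1 / (2 * real n)) * (\<Sum>i<n. (y i - \<sigma> (a i + t * x i))\<^sup>2)" for t
    unfolding emp_risk_def a_def x_def y_def using dotp_upd[OF j] by simp
  have tm: "((\<lambda>t. (y i - \<sigma> (a i + t * x i))\<^sup>2) has_real_derivative
      2 * (y i - \<sigma> (a i)) * (- (\<sigma>1 (a i) * x i))) (at 0)" for i
  proof -
    have h1: "((\<lambda>t. a i + t * x i) has_real_derivative x i) (at 0)"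
      by (auto intro!: derivative_eq_intros)
    have h2: "((\<lambda>t. \<sigma> (a i + t * x i)) has_real_derivative \<sigma>1 (a i) * x i) (at 0)"
      using DERIV_chain2[OF d1 h1] by simp
    have h3: "((\<lambda>t. y i - \<sigma> (a i + t * x i)) has_real_derivative - (\<sigma>1 (a i) * x i)) (at 0)"
      using DERIV_diff[OF DERIV_const h2] by simp
    show ?thesis using DERIV_power[OF h3, of 2] by (simp add: power2_eq_square algebra_simps)
  qed
  have D: "((\<lambda>t. emp_risk d n \<sigma> S (w(j := w j + t))) has_real_derivative
      (1 / (2 * real n)) * (\<Sum>i<n. 2 * (y i - \<sigma> (a i)) * (- (\<sigma>1 (a i) * x i)))) (at 0)"
    unfolding eq by (intro DERIV_cmult DERIV_sum tm)
  have "((\<lambda>t. emp_risk d n \<sigma> S (w(j := w j + t))) has_real_derivative 0) (at 0)"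
    using gz j unfolding grad_zero_def by blast
  from DERIV_unique[OF D this]
  have "(1 / (2 * real n)) * (\<Sum>i<n. 2 * (y i - \<sigma> (a i)) * (- (\<sigma>1 (a i) * x i))) = 0" .
  then have "n = 0 \<or> (\<Sum>i<n. 2 * (y i - \<sigma> (a i)) * (- (\<sigma>1 (a i) * x i))) = 0" by auto
  then have "(\<Sum>i<n. 2 * (y i - \<sigma> (a i)) * (- (\<sigma>1 (a i) * x i))) = 0" by auto
  moreover have "(\<Sum>i<n. 2 * (y i - \<sigma> (a i)) * (- (\<sigma>1 (a i) * x i))) =
      2 * (\<Sum>i<n. (\<sigma> (a i) - y i) * \<sigma>1 (a i) * x i)"
    by (simp add: sum_distrib_left algebra_simps)
  ultimately show ?thesis unfolding a_def x_def y_def by simp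
qed

end


definition ev :: "nat \<Rightarrow> nat \<Rightarrow> real" where "ev j = (\<lambda>i. if i = j then 1 else 0)"

lemma dotp_ev: "j < d \<Longrightarrow> dotp d (ev j) x = x j"
proof -
  assume j: "j < d"
  have "dotp d (ev j) x = (\<Sum>i<d. if i = j then x i else 0)"
    unfolding dotp_def ev_def by (intro sum.cong) auto
  also have "\<dots> = x j" using j by simp
  finally show ?thesis .
qed

lemma dotp_as_ev: "dotp d g x = (\<Sum>j<d. g j * dotp d (ev j) x)"
  unfolding dotp_def by (intro sum.cong refl) (simp add: dotp_ev[unfolded dotp_def])

definition Gw :: "nat \<Rightarrow> nat \<Rightarrow> real \<Rightarrow> real \<Rightarrow> (nat \<Rightarrow> real) set" where
  "Gw d n B R = grid (1 / (B * n * d)) (nat \<lceil>R * B * n * d\<rceil>) d"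

definition Gu :: "nat \<Rightarrow> (nat \<Rightarrow> real) set" where
  "Gu d = {g \<in> grid (1 / d) d d. nrm d g \<le> 3/2}"

lemma Gw_finite: "finite (Gw d n B R)" unfolding Gw_def by (rule grid_finite)
lemma Gu_finite: "finite (Gu d)" unfolding Gu_def using grid_finite by auto

context lnk
begin

lemma core:
  fixes P :: "(nat \<Rightarrow> real) \<Rightarrow> (nat \<Rightarrow> real) \<Rightarrow> real"
  assumes Plin: "\<And>w g. P w g = (\<Sum>j<d. g j * P w (ev j))"
    and Plip: "\<And>w w' g. \<bar>P w g - P w' g\<bar> \<le> 3 * B\<^sup>2 * nrm d (\<lambda>i. w i - w' i) * nrm d g"
    and Plow: "\<And>w. nrm d w \<le> R \<Longrightarrow> P w (\<lambda>i. w i - wstar i) \<ge> c * (nrm d (\<lambda>i. w i - wstar i))\<^sup>2"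
    and c: "c > 0" and n: "n > 0" and d: "d > 0" and B: "B > 0" and R: "R > 0" and t: "t \<ge> 0"
    and Sok: "\<And>i. i < n \<Longrightarrow> nrm d (fst (S i)) \<le> B \<and> -1 \<le> snd (S i) \<and> snd (S i) \<le> 2"
    and good: "\<And>w' g. w' \<in> Gw d n B R \<Longrightarrow> g \<in> Gu d \<Longrightarrow>
                 \<bar>(\<Sum>i<n. phi \<sigma> \<sigma>1 d w' g (S i)) / n - P w' g\<bar> < t"
    and w: "nrm d w \<le> R" and gz: "grad_zero d (emp_risk d n \<sigma> S) w"
  shows "nrm d (\<lambda>i. w i - wstar i) \<le> (2 * t + 9 * B / n) / c"
proof -
  define K where "K = t + 9 * B / (2 * n)"
  have K0: "K \<ge> 0" using t B n by (simp add: K_def)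
  have s1: "(\<Sum>i<n. phi \<sigma> \<sigma>1 d w g (S i)) = 0" for g
  proof -
    have "(\<Sum>i<n. phi \<sigma> \<sigma>1 d w g (S i)) =
       (\<Sum>i<n. \<Sum>j<d. g j * ((\<sigma> (dotp d w (fst (S i))) - snd (S i)) * \<sigma>1 (dotp d w (fst (S i))) * fst (S i) j))"
      unfolding phi_def dotp_def by (intro sum.cong refl) (simp add: sum_distrib_right mult_ac)
    also have "\<dots> = (\<Sum>j<d. g j * (\<Sum>i<n. (\<sigma> (dotp d w (fst (S i))) - snd (S i)) * \<sigma>1 (dotp d w (fst (S i))) * fst (S i) j))"
      by (subst sum.swap) (simp add: sum_distrib_left)
    also have "\<dots> = 0" using grad_formula[OF gz] by simp
    finally show ?thesis .
  qed
  define h where "h = 1 / (B * n * d)"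
  define M where "M = nat \<lceil>R * B * n * d\<rceil>"
  have h0: "h > 0" using B n d by (simp add: h_def)
  have hM: "R \<le> h * M"
  proof -
    have "R * B * n * d \<le> M" unfolding M_def by linarith
    then have "R * B * n * d * h \<le> M * h" using h0 by (intro mult_right_mono) auto
    moreover have "R * B * n * d * h = R" using B n d by (simp add: h_def)
    ultimately show ?thesis by (metis mult.commute)
  qed
  obtain w' where w'G: "w' \<in> Gw d n B R" and w'c: "\<forall>j<d. \<bar>w j - w' j\<bar> \<le> h / 2"
    using grid_round[OF h0, of d w M] abs_comp_le_nrm[of _ d w] w hM
    unfolding Gw_def h_def[symmetric] M_def[symmetric] by force
  have nww': "nrm d (\<lambda>i. w i - w' i) \<le> 1 / (2 * B * n)"
  proof -
    have "nrm d (\<lambda>i. w i - w' i) \<le> h / 2 * sqrt d" using w'c by (intro nrm_le_const) auto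
    also have "sqrt d \<le> d" using d by (simp add: real_sqrt_le_iff' power2_eq_square le_square)
    then have "h / 2 * sqrt d \<le> h / 2 * d" using h0 by (intro mult_left_mono) auto
    also have "h / 2 * d = 1 / (2 * B * n)" using d by (simp add: h_def)
    finally show ?thesis by simp
  qed
  have s3: "\<bar>P w g\<bar> \<le> K" if gG: "g \<in> Gu d" for g
  proof -
    have ng: "nrm d g \<le> 3/2" using gG by (simp add: Gu_def)
    have lipc: "3 * B\<^sup>2 * nrm d (\<lambda>i. w i - w' i) * nrm d g \<le> 9 * B / (4 * n)"
    proof -
      have "3 * B\<^sup>2 * nrm d (\<lambda>i. w i - w' i) * nrm d g \<le> 3 * B\<^sup>2 * (1 / (2 * B * n)) * (3/2)"
        by (intro mult_mono nww' ng mult_left_mono) (use B n in auto)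
      also have "\<dots> = 9 * B / (4 * n)" using B n by (simp add: power2_eq_square field_simps)
      finally show ?thesis .
    qed
    have e1: "\<bar>(\<Sum>i<n. phi \<sigma> \<sigma>1 d w g (S i)) - (\<Sum>i<n. phi \<sigma> \<sigma>1 d w' g (S i))\<bar> \<le> n * (9 * B / (4 * n))"
    proof -
      have "\<bar>(\<Sum>i<n. phi \<sigma> \<sigma>1 d w g (S i)) - (\<Sum>i<n. phi \<sigma> \<sigma>1 d w' g (S i))\<bar>
          \<le> (\<Sum>i<n. \<bar>phi \<sigma> \<sigma>1 d w g (S i) - phi \<sigma> \<sigma>1 d w' g (S i)\<bar>)"
        by (simp add: sum_subtractf[symmetric] sum_abs)
      also have "\<dots> \<le> (\<Sum>i<n. 9 * B / (4 * n))"
        by (intro sum_mono order_trans[OF phi_lip lipc]) (use Sok in auto)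
      finally show ?thesis by simp
    qed
    then have e1': "\<bar>(\<Sum>i<n. phi \<sigma> \<sigma>1 d w' g (S i)) / n\<bar> \<le> 9 * B / (4 * n)"
      using s1[of g] n by (simp add: abs_minus_commute divide_simps)
    have e2: "\<bar>(\<Sum>i<n. phi \<sigma> \<sigma>1 d w' g (S i)) / n - P w' g\<bar> < t" by (rule good[OF w'G gG])
    have e3: "\<bar>P w g - P w' g\<bar> \<le> 9 * B / (4 * n)" using Plip lipc by (rule order_trans)
    show ?thesis using e1' e2 e3 unfolding K_def by linarith
  qed
  define p where "p = (\<lambda>j. P w (ev j))"
  have Pg: "P w g = dotp d g p" for g unfolding dotp_def p_def by (rule Plin)
  have s4: "nrm d p \<le> 2 * K"
  proof (cases "nrm d p = 0")
    case True then show ?thesis using K0 by simp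
  next
    case False
    then have np: "nrm d p > 0" using L2_set_nonneg[of p "{..<d}"] by linarith
    define v where "v = (\<lambda>j. p j * (1 / nrm d p))"
    have nv: "nrm d v = 1" unfolding v_def using np by (subst nrm_scale) auto
    have vb: "\<bar>v j\<bar> \<le> 1 / d * d" if "j < d" for j
    proof -
      have "\<bar>v j\<bar> \<le> nrm d v" by (rule abs_comp_le_nrm[OF that])
      then show ?thesis using nv d by simp
    qed
    obtain g where gG: "g \<in> grid (1/d) d d" and gc: "\<forall>j<d. \<bar>v j - g j\<bar> \<le> 1 / d / 2"
      using grid_round[of "1/d" d v d] vb d by auto
    have nvg: "nrm d (\<lambda>i. v i - g i) \<le> 1/2"
    proof -
      have "nrm d (\<lambda>i. v i - g i) \<le> 1 / d / 2 * sqrt d" using gc by (intro nrm_le_const) auto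
      also have "\<dots> = 1 / (2 * sqrt d)" using d by (simp add: field_simps real_sqrt_mult[symmetric] power2_eq_square[symmetric])
      also have "\<dots> \<le> 1/2" using d by (simp add: divide_simps)
      finally show ?thesis .
    qed
    have "nrm d g = nrm d (\<lambda>i. v i - (v i - g i))" by simp
    also have "\<dots> \<le> nrm d v + nrm d (\<lambda>i. v i - g i)" by (rule nrm_diff_le)
    finally have "nrm d g \<le> 3/2" using nv nvg by simp
    then have gU: "g \<in> Gu d" using gG by (simp add: Gu_def)
    have "nrm d p = dotp d v p"
      using dotp_self[of d p] np unfolding v_def dotp_def
      by (simp add: power2_eq_square sum_divide_distrib[symmetric])
    also have "\<dots> = dotp d g p + dotp d (\<lambda>i. v i - g i) p" by (simp add: dotp_diff)
    also have "\<dots> \<le> K + nrm d (\<lambda>i. v i - g i) * nrm d p"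
      using s3[OF gU] Pg[of g] dotp_nrm_le[of d "\<lambda>i. v i - g i" p] by linarith
    also have "\<dots> \<le> K + 1/2 * nrm d p" using nvg np by (intro add_left_mono mult_right_mono) auto
    finally show ?thesis by linarith
  qed
  define u where "u = (\<lambda>i. w i - wstar i)"
  have "c * (nrm d u)\<^sup>2 \<le> P w u" using Plow[OF w] unfolding u_def .
  also have "\<dots> = dotp d u p" by (rule Pg)
  also have "\<dots> \<le> nrm d u * nrm d p" by (rule dotp_nrm_le)
  also have "\<dots> \<le> nrm d u * (2 * K)" by (intro mult_left_mono s4) auto
  finally have key: "c * (nrm d u)\<^sup>2 \<le> nrm d u * (2 * K)" .
  have "nrm d u \<le> 2 * K / c"
  proof (cases "nrm d u = 0")
    case True then show ?thesis using K0 c by simp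
  next
    case False
    then have "nrm d u > 0" using L2_set_nonneg[of u "{..<d}"] by linarith
    then have "c * nrm d u \<le> 2 * K" using key by (simp add: power2_eq_square mult_ac)
    then show ?thesis using c by (simp add: field_simps)
  qed
  also have "2 * K = 2 * t + 9 * B / n" using n by (simp add: K_def field_simps)
  finally show ?thesis unfolding u_def .
qed

end


lemma dotp_meas[measurable]: "(\<lambda>x. dotp d w x) \<in> borel_measurable (vec_space d)"
  unfolding dotp_def vec_space_def by measurable

lemma L2_meas[measurable]: "(\<lambda>x. L2_set x {..<d}) \<in> borel_measurable (vec_space d)"
  unfolding L2_set_def vec_space_def by measurable

locale setting = lnk +
  fixes d n :: nat and B R lam \<gamma> :: real and wstar :: "nat \<Rightarrow> real"
    and Dx :: "(nat \<Rightarrow> real) measure" and Ne :: "real measure"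
  assumes cov: "covariates_ok d B lam Dx"
    and wst: "L2_set wstar {..<d} \<le> R"
    and BR: "B * R \<ge> 1"
    and gam: "\<And>t. t \<in> {-(B*R)..B*R} \<Longrightarrow> \<sigma>1 t \<ge> \<gamma>" and gam0: "\<gamma> > 0"
    and noise: "noise_ok Ne"
begin

lemma cont_s: "continuous_on UNIV \<sigma>"
  using d1 by (intro continuous_at_imp_continuous_on ballI DERIV_isCont) auto
lemma cont_s1: "continuous_on UNIV \<sigma>1"
  using d2 by (intro continuous_at_imp_continuous_on ballI DERIV_isCont) auto

lemma s_meas[measurable]: "\<sigma> \<in> borel_measurable borel"
  by (rule borel_measurable_continuous_onI[OF cont_s])
lemma s1_meas[measurable]: "\<sigma>1 \<in> borel_measurable borel"
  by (rule borel_measurable_continuous_onI[OF cont_s1])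

lemma Dx_prob: "prob_space Dx" using cov by (simp add: covariates_ok_def)
lemma Dx_sets: "sets Dx = sets (vec_space d)" using cov by (simp add: covariates_ok_def)
lemma lam0: "lam > 0" using cov by (simp add: covariates_ok_def)
lemma Dx_AE: "AE x in Dx. L2_set x {..<d} \<le> B" using cov by (simp add: covariates_ok_def)
lemma Dx_cov: "(\<integral>x. (dotp d v x)\<^sup>2 \<partial>Dx) \<ge> lam * (\<Sum>i<d. (v i)\<^sup>2)" using cov by (simp add: covariates_ok_def)
lemma Ne_prob: "prob_space Ne" using noise by (simp add: noise_ok_def)
lemma Ne_sets: "sets Ne = sets borel" using noise by (simp add: noise_ok_def)
lemma Ne_AE: "AE e in Ne. \<bar>e\<bar> \<le> 1" using noise by (simp add: noise_ok_def)
lemma Ne_mean: "(\<integral>e. e \<partial>Ne) = 0" using noise by (simp add: noise_ok_def)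

lemma R0: "R > 0"
proof -
  have "R \<ge> 0" using wst L2_set_nonneg order_trans by blast
  moreover have "R \<noteq> 0" using BR by auto
  ultimately show ?thesis by simp
qed
lemma B0: "B > 0"
proof -
  have "0 < B * R" using BR by simp
  then show ?thesis using R0 by (simp add: zero_less_mult_iff)
qed

interpretation Dx: prob_space Dx by (rule Dx_prob)
interpretation Ne: prob_space Ne by (rule Ne_prob)
interpretation DN: pair_prob_space Dx Ne by unfold_locales

abbreviation "D \<equiv> glm_dist d \<sigma> wstar Dx Ne"

lemma DN_sets: "sets (Dx \<Otimes>\<^sub>M Ne) = sets (vec_space d \<Otimes>\<^sub>M borel)"
  by (intro sets_pair_measure_cong Dx_sets Ne_sets)
lemma DN_space: "space (Dx \<Otimes>\<^sub>M Ne) = space (vec_space d \<Otimes>\<^sub>M borel)"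
  by (rule sets_eq_imp_space_eq[OF DN_sets])
lemma meas_DN: "measurable (Dx \<Otimes>\<^sub>M Ne) N = measurable (vec_space d \<Otimes>\<^sub>M borel) N"
  by (rule measurable_cong_sets[OF DN_sets refl])
lemma meas_Dx: "measurable Dx N = measurable (vec_space d) N"
  by (rule measurable_cong_sets[OF Dx_sets refl])
lemma Dx_space: "space Dx = space (vec_space d)"
  by (rule sets_eq_imp_space_eq[OF Dx_sets])

lemma glm_map_meas: "(\<lambda>(x, e). (x, \<sigma> (dotp d wstar x) + e)) \<in> measurable (Dx \<Otimes>\<^sub>M Ne) (vec_space d \<Otimes>\<^sub>M borel)"
  unfolding meas_DN by measurable

lemma D_prob: "prob_space D"
  unfolding glm_dist_def by (rule DN.prob_space_distr[OF glm_map_meas])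

lemma D_sets: "sets D = sets (vec_space d \<Otimes>\<^sub>M borel)"
  unfolding glm_dist_def by simp

lemma D_space: "space D = space (vec_space d \<Otimes>\<^sub>M borel)"
  unfolding glm_dist_def by simp

lemma phi_meas[measurable]: "phi \<sigma> \<sigma>1 d w g \<in> borel_measurable (vec_space d \<Otimes>\<^sub>M borel)"
  unfolding phi_def by measurable

definition ok :: "(nat \<Rightarrow> real) \<times> real \<Rightarrow> bool" where
  "ok z \<longleftrightarrow> L2_set (fst z) {..<d} \<le> B \<and> \<bar>snd z - \<sigma> (dotp d wstar (fst z))\<bar> \<le> 1"

lemma ok_meas[measurable]: "Measurable.pred (vec_space d \<Otimes>\<^sub>M borel) ok"
  unfolding ok_def by measurable

lemma ok_y: "ok z \<Longrightarrow> -1 \<le> snd z \<and> snd z \<le> 2"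
  using s01[of "dotp d wstar (fst z)"] unfolding ok_def by auto

lemma D_AE_ok: "AE z in D. ok z"
proof -
  have "AE z in Dx \<Otimes>\<^sub>M Ne. ok (fst z, \<sigma> (dotp d wstar (fst z)) + snd z)"
  proof (rule DN.AE_pair_measure)
    show "{z \<in> space (Dx \<Otimes>\<^sub>M Ne). ok (fst z, \<sigma> (dotp d wstar (fst z)) + snd z)} \<in> sets (Dx \<Otimes>\<^sub>M Ne)"
    proof -
      have "Measurable.pred (vec_space d \<Otimes>\<^sub>M borel) (\<lambda>z. ok (fst z, \<sigma> (dotp d wstar (fst z)) + snd z))"
        by measurable
      then have "Measurable.pred (Dx \<Otimes>\<^sub>M Ne) (\<lambda>z. ok (fst z, \<sigma> (dotp d wstar (fst z)) + snd z))"
        unfolding meas_DN .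
      then show ?thesis unfolding pred_def .
    qed
    show "AE x in Dx. AE y in Ne. ok (fst (x, y), \<sigma> (dotp d wstar (fst (x, y))) + snd (x, y))"
      using Dx_AE Ne_AE by (auto simp: ok_def elim!: eventually_mono)
  qed
  then show ?thesis
    unfolding glm_dist_def
    by (subst AE_distr_iff[OF glm_map_meas]) (auto simp: split_beta)
qed

end


lemma prob_abs_integral_le:
  fixes f :: "'a \<Rightarrow> real"
  assumes "prob_space M" "integrable M f" "AE x in M. \<bar>f x\<bar> \<le> c"
  shows "\<bar>\<integral>x. f x \<partial>M\<bar> \<le> c"
proof -
  interpret prob_space M by fact
  have "\<bar>\<integral>x. f x \<partial>M\<bar> \<le> (\<integral>x. \<bar>f x\<bar> \<partial>M)" by (rule integral_abs_bound)
  also have "\<dots> \<le> (\<integral>x. c \<partial>M)"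
    using assms by (intro integral_mono_AE) auto
  also have "\<dots> = c" by (simp add: prob_space)
  finally show ?thesis .
qed

context setting
begin

interpretation Dx: prob_space Dx by (rule Dx_prob)
interpretation Ne: prob_space Ne by (rule Ne_prob)
interpretation DN: pair_prob_space Dx Ne by unfold_locales
interpretation D: prob_space D by (rule D_prob)

lemma meas_D: "measurable D N = measurable (vec_space d \<Otimes>\<^sub>M borel) N"
  by (rule measurable_cong_sets[OF D_sets refl])

lemma phi_bound_ok: "ok z \<Longrightarrow> \<bar>phi \<sigma> \<sigma>1 d w g z\<bar> \<le> 2 * B * nrm d g"
  using ok_y[of z] by (intro phi_bound) (auto simp: ok_def)

lemma phi_int: "integrable D (phi \<sigma> \<sigma>1 d w g)"
proof (rule D.integrable_const_bound[where B = "2 * B * nrm d g"])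
  show "AE x in D. norm (phi \<sigma> \<sigma>1 d w g x) \<le> 2 * B * nrm d g"
    using D_AE_ok by (auto elim!: eventually_mono intro: phi_bound_ok)
  show "phi \<sigma> \<sigma>1 d w g \<in> borel_measurable D" unfolding meas_D by measurable
qed

definition P :: "(nat \<Rightarrow> real) \<Rightarrow> (nat \<Rightarrow> real) \<Rightarrow> real" where
  "P w g = (\<integral>z. phi \<sigma> \<sigma>1 d w g z \<partial>D)"

lemma P_lin: "P w g = (\<Sum>j<d. g j * P w (ev j))"
proof -
  have eq: "phi \<sigma> \<sigma>1 d w g = (\<lambda>z. \<Sum>j<d. g j * phi \<sigma> \<sigma>1 d w (ev j) z)"
    unfolding phi_def by (rule ext, subst dotp_as_ev) (simp add: sum_distrib_left mult_ac)
  have "P w g = (\<integral>z. (\<Sum>j<d. g j * phi \<sigma> \<sigma>1 d w (ev j) z) \<partial>D)"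
    unfolding P_def by (subst eq) (rule refl)
  also have "\<dots> = (\<Sum>j<d. g j * P w (ev j))"
    unfolding P_def by (simp add: phi_int)
  finally show ?thesis .
qed

lemma P_lip: "\<bar>P w g - P w' g\<bar> \<le> 3 * B\<^sup>2 * nrm d (\<lambda>i. w i - w' i) * nrm d g"
proof -
  have "P w g - P w' g = (\<integral>z. phi \<sigma> \<sigma>1 d w g z - phi \<sigma> \<sigma>1 d w' g z \<partial>D)"
    unfolding P_def by (simp add: phi_int)
  moreover have "\<bar>\<integral>z. phi \<sigma> \<sigma>1 d w g z - phi \<sigma> \<sigma>1 d w' g z \<partial>D\<bar> \<le> 3 * B\<^sup>2 * nrm d (\<lambda>i. w i - w' i) * nrm d g"
  proof (rule prob_abs_integral_le[OF D_prob])
    show "integrable D (\<lambda>z. phi \<sigma> \<sigma>1 d w g z - phi \<sigma> \<sigma>1 d w' g z)" by (simp add: phi_int)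
    show "AE z in D. \<bar>phi \<sigma> \<sigma>1 d w g z - phi \<sigma> \<sigma>1 d w' g z\<bar> \<le> 3 * B\<^sup>2 * nrm d (\<lambda>i. w i - w' i) * nrm d g"
      using D_AE_ok
    proof (rule eventually_mono)
      fix z assume "ok z"
      then show "\<bar>phi \<sigma> \<sigma>1 d w g z - phi \<sigma> \<sigma>1 d w' g z\<bar> \<le> 3 * B\<^sup>2 * nrm d (\<lambda>i. w i - w' i) * nrm d g"
        using ok_y[of z] by (intro phi_lip) (auto simp: ok_def)
    qed
  qed
  ultimately show ?thesis by simp
qed


lemma Ne_int_id: "integrable Ne (\<lambda>e. e)"
proof (rule Ne.integrable_const_bound[where B = 1])
  show "AE x in Ne. norm x \<le> 1" using Ne_AE by auto
  show "(\<lambda>e. e) \<in> borel_measurable Ne" by (simp add: measurable_cong_sets[OF Ne_sets refl])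
qed

lemma dot_bound: "nrm d x \<le> B \<Longrightarrow> \<bar>dotp d v x\<bar> \<le> nrm d v * B"
  using dotp_cs[of d v x] by (meson L2_set_nonneg mult_left_mono order_trans)

lemma P_low:
  assumes w: "nrm d w \<le> R"
  shows "P w (\<lambda>i. w i - wstar i) \<ge> (\<gamma>\<^sup>2 * lam) * (nrm d (\<lambda>i. w i - wstar i))\<^sup>2"
proof -
  define u where "u = (\<lambda>i. w i - wstar i)"
  define T where "T = (\<lambda>(x, e). (x, \<sigma> (dotp d wstar x) + e))"
  define F where "F = (\<lambda>z. phi \<sigma> \<sigma>1 d w u (T z))"
  define h where "h = (\<lambda>x. (\<sigma> (dotp d w x) - \<sigma> (dotp d wstar x)) * \<sigma>1 (dotp d w x) * dotp d u x)"
  define k where "k = (\<lambda>x. \<sigma>1 (dotp d w x) * dotp d u x)"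
  have Tm: "T \<in> measurable (Dx \<Otimes>\<^sub>M Ne) (vec_space d \<Otimes>\<^sub>M borel)"
    unfolding T_def by (rule glm_map_meas)
  have "P w u = (\<integral>z. F z \<partial>(Dx \<Otimes>\<^sub>M Ne))"
    unfolding P_def F_def glm_dist_def T_def[symmetric]
    by (rule integral_distr[OF Tm]) measurable
  moreover have Fint: "integrable (Dx \<Otimes>\<^sub>M Ne) F"
    unfolding F_def using phi_int[of w u] Tm
    by (intro integrable_distr[OF Tm]) (simp add: glm_dist_def T_def)
  ultimately have "P w u = (\<integral>x. (\<integral>e. F (x, e) \<partial>Ne) \<partial>Dx)"
    by (simp add: DN.integral_fst')
  also have "\<dots> = (\<integral>x. h x \<partial>Dx)"
  proof (intro Bochner_Integration.integral_cong refl)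
    fix x
    have "F (x, e) = h x - e * k x" for e
      unfolding F_def T_def phi_def h_def k_def by (simp add: dotp_diff u_def algebra_simps)
    then have "(\<integral>e. F (x, e) \<partial>Ne) = (\<integral>e. h x - e * k x \<partial>Ne)" by simp
    also have "\<dots> = h x - (\<integral>e. e \<partial>Ne) * k x"
      using Ne_int_id by (simp add: Ne.prob_space)
    also have "\<dots> = h x" by (simp add: Ne_mean)
    finally show "(\<integral>e. F (x, e) \<partial>Ne) = h x" .
  qed
  also have "\<dots> \<ge> (\<integral>x. \<gamma>\<^sup>2 * (dotp d u x)\<^sup>2 \<partial>Dx)"
  proof (rule integral_mono_AE)
    show "integrable Dx (\<lambda>x. \<gamma>\<^sup>2 * (dotp d u x)\<^sup>2)"
    proof (rule Dx.integrable_const_bound[where B = "\<gamma>\<^sup>2 * (nrm d u * B)\<^sup>2"])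
      show "AE x in Dx. norm (\<gamma>\<^sup>2 * (dotp d u x)\<^sup>2) \<le> \<gamma>\<^sup>2 * (nrm d u * B)\<^sup>2"
        using Dx_AE
      proof (rule eventually_mono)
        fix x assume "nrm d x \<le> B"
        then have "\<bar>dotp d u x\<bar> \<le> nrm d u * B" by (rule dot_bound)
        then have "(dotp d u x)\<^sup>2 \<le> (nrm d u * B)\<^sup>2"
          by (metis abs_ge_zero order_trans power2_abs power_mono)
        then show "norm (\<gamma>\<^sup>2 * (dotp d u x)\<^sup>2) \<le> \<gamma>\<^sup>2 * (nrm d u * B)\<^sup>2"
          by (simp add: mult_left_mono)
      qed
      show "(\<lambda>x. \<gamma>\<^sup>2 * (dotp d u x)\<^sup>2) \<in> borel_measurable Dx" unfolding meas_Dx by measurable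
    qed
    show "integrable Dx h"
    proof (rule Dx.integrable_const_bound[where B = "2 * (nrm d u * B)"])
      show "AE x in Dx. norm (h x) \<le> 2 * (nrm d u * B)"
        using Dx_AE
      proof (rule eventually_mono)
        fix x assume "nrm d x \<le> B"
        then have 1: "\<bar>dotp d u x\<bar> \<le> nrm d u * B" by (rule dot_bound)
        have 2: "\<bar>\<sigma> (dotp d w x) - \<sigma> (dotp d wstar x)\<bar> \<le> 2"
          using s01[of "dotp d w x"] s01[of "dotp d wstar x"] by auto
        have "\<bar>h x\<bar> = \<bar>\<sigma> (dotp d w x) - \<sigma> (dotp d wstar x)\<bar> * \<bar>\<sigma>1 (dotp d w x)\<bar> * \<bar>dotp d u x\<bar>"
          by (simp add: h_def abs_mult)
        also have "\<dots> \<le> 2 * 1 * (nrm d u * B)"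
          by (intro mult_mono 1 2 b1) auto
        finally show "norm (h x) \<le> 2 * (nrm d u * B)" by simp
      qed
      show "h \<in> borel_measurable Dx" unfolding meas_Dx h_def by measurable
    qed
    show "AE x in Dx. \<gamma>\<^sup>2 * (dotp d u x)\<^sup>2 \<le> h x"
      using Dx_AE
    proof (rule eventually_mono)
      fix x assume x: "nrm d x \<le> B"
      have "nrm d w * B \<le> R * B" using w B0 by (intro mult_right_mono) auto
      then have a: "dotp d w x \<in> {-(B*R)..B*R}"
        using dot_bound[OF x, of w] by (auto simp: abs_le_iff mult.commute)
      have "nrm d wstar * B \<le> R * B" using wst B0 by (intro mult_right_mono) auto
      then have b: "dotp d wstar x \<in> {-(B*R)..B*R}"
        using dot_bound[OF x, of wstar] by (auto simp: abs_le_iff mult.commute)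
      have "\<gamma>\<^sup>2 * (dotp d w x - dotp d wstar x)\<^sup>2 \<le>
          (\<sigma> (dotp d w x) - \<sigma> (dotp d wstar x)) * \<sigma>1 (dotp d w x) * (dotp d w x - dotp d wstar x)"
        by (rule sigma_low2[OF gam _ a b]) (use gam0 in auto)
      then show "\<gamma>\<^sup>2 * (dotp d u x)\<^sup>2 \<le> h x"
        unfolding h_def u_def dotp_diff .
    qed
  qed
  also have "(\<integral>x. \<gamma>\<^sup>2 * (dotp d u x)\<^sup>2 \<partial>Dx) = \<gamma>\<^sup>2 * (\<integral>x. (dotp d u x)\<^sup>2 \<partial>Dx)"
    by simp
  also have "\<dots> \<ge> \<gamma>\<^sup>2 * (lam * (\<Sum>i<d. (u i)\<^sup>2))"
    by (intro mult_left_mono Dx_cov) auto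
  also have "(\<Sum>i<d. (u i)\<^sup>2) = (nrm d u)\<^sup>2"
    unfolding L2_set_def by (simp add: sum_nonneg)
  finally show ?thesis unfolding u_def by (simp add: mult_ac)
qed

end


context setting
begin

interpretation D: prob_space D by (rule D_prob)

abbreviation "Ms \<equiv> sample_measure n D"

lemma Ms_prob: "prob_space Ms"
  unfolding sample_measure_def by (intro prob_space_PiM D_prob)

interpretation Ms: prob_space Ms by (rule Ms_prob)

lemma comp_meas[measurable]: "i < n \<Longrightarrow> (\<lambda>S. S i) \<in> measurable Ms D"
  unfolding sample_measure_def by (intro measurable_component_singleton) auto

lemma Ms_distr_comp: "i < n \<Longrightarrow> distr Ms D (\<lambda>S. S i) = D"
  unfolding sample_measure_def by (intro distr_PiM_component D_prob) auto

lemma Ms_AE_ok: "AE S in Ms. \<forall>i<n. ok (S i)"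
proof -
  have "AE S in Ms. \<forall>i\<in>{..<n}. ok (S i)"
    unfolding sample_measure_def
    by (intro AE_finite_allI AE_PiM_component D_prob D_AE_ok) auto
  then show ?thesis by auto
qed

lemma coords_indep:
  assumes n: "n > 0"
  shows "Ms.indep_vars (\<lambda>_. D) (\<lambda>i S. S i) {..<n}"
proof -
  have "Ms.indep_vars (\<lambda>_. D) (\<lambda>i S. S i) {..<n} \<longleftrightarrow>
      distr Ms (\<Pi>\<^sub>M i\<in>{..<n}. D) (\<lambda>x. \<lambda>i\<in>{..<n}. x i) = (\<Pi>\<^sub>M i\<in>{..<n}. distr Ms D (\<lambda>S. S i))"
    using n by (intro Ms.indep_vars_iff_distr_eq_PiM') auto
  moreover have "distr Ms (\<Pi>\<^sub>M i\<in>{..<n}. D) (\<lambda>x. \<lambda>i\<in>{..<n}. x i) = distr Ms Ms (\<lambda>x. x)"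
    unfolding sample_measure_def
    by (intro distr_cong refl) (auto simp: space_PiM PiE_def extensional_def restrict_def fun_eq_iff)
  moreover have "(\<Pi>\<^sub>M i\<in>{..<n}. distr Ms D (\<lambda>S. S i)) = (\<Pi>\<^sub>M i\<in>{..<n}. D)"
    by (intro PiM_cong refl Ms_distr_comp) auto
  ultimately show ?thesis by (simp add: sample_measure_def)
qed

lemma hoeff:
  assumes n: "n > 0" and ng: "nrm d g \<le> 3/2" and eps: "\<epsilon> \<ge> 0"
  shows "measure Ms {S \<in> space Ms. \<bar>(\<Sum>i<n. phi \<sigma> \<sigma>1 d w g (S i)) - n * P w g\<bar> \<ge> \<epsilon>}
           \<le> 2 * exp (- \<epsilon>\<^sup>2 / (18 * n * B\<^sup>2))"
proof -
  define X :: "nat \<Rightarrow> (nat \<Rightarrow> (nat \<Rightarrow> real) \<times> real) \<Rightarrow> real" where "X = (\<lambda>i S. phi \<sigma> \<sigma>1 d w g (S i))"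
  have ind: "Ms.indep_vars (\<lambda>_. borel) X {..<n}"
    unfolding X_def
    by (rule Ms.indep_vars_compose2[OF coords_indep[OF n]]) (simp add: meas_D)
  have bnd: "AE S in Ms. X i S \<in> {-(3*B)..3*B}" if i: "i \<in> {..<n}" for i
    using Ms_AE_ok
  proof (rule eventually_mono)
    fix S assume "\<forall>i<n. ok (S i)"
    then have "ok (S i)" using i by auto
    then have "\<bar>X i S\<bar> \<le> 2 * B * nrm d g" unfolding X_def by (rule phi_bound_ok)
    also have "\<dots> \<le> 2 * B * (3/2)" using ng B0 by (intro mult_left_mono) auto
    finally show "X i S \<in> {-(3*B)..3*B}" by auto
  qed
  interpret H: indep_interval_bounded_random_variables Ms "{..<n}" X "\<lambda>_. -(3*B)" "\<lambda>_. 3*B"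
    by unfold_locales (use ind bnd in auto)
  have exX: "Ms.expectation (X i) = P w g" if "i \<in> {..<n}" for i
  proof -
    have "Ms.expectation (X i) = (\<integral>z. phi \<sigma> \<sigma>1 d w g z \<partial>distr Ms D (\<lambda>S. S i))"
      unfolding X_def using that by (subst integral_distr) (auto simp: meas_D)
    also have "\<dots> = P w g" using that by (simp add: Ms_distr_comp P_def)
    finally show ?thesis .
  qed
  have mu: "(\<Sum>i\<in>{..<n}. Ms.expectation (X i)) = n * P w g" using exX by simp
  interpret HH: Hoeffding_ineq Ms "{..<n}" X "\<lambda>_. -(3*B)" "\<lambda>_. 3*B" "n * P w g"
    by unfold_locales (simp add: mu)
  have pos: "(\<Sum>i\<in>{..<n}. (3*B - -(3*B))\<^sup>2) > 0" using n B0 by simp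
  have "Ms.prob {S \<in> space Ms. \<bar>(\<Sum>i\<in>{..<n}. X i S) - n * P w g\<bar> \<ge> \<epsilon>}
      \<le> 2 * exp (-2 * \<epsilon>\<^sup>2 / (\<Sum>i\<in>{..<n}. (3*B - -(3*B))\<^sup>2))"
    by (rule HH.Hoeffding_ineq_abs_ge[OF eps pos])
  also have "-2 * \<epsilon>\<^sup>2 / (\<Sum>i\<in>{..<n}. (3*B - -(3*B))\<^sup>2) = - \<epsilon>\<^sup>2 / (18 * n * B\<^sup>2)"
    using n B0 by (simp add: power2_eq_square field_simps)
  finally show ?thesis unfolding X_def by simp
qed

end


lemma final_alg:
  fixes n d :: nat and B R \<delta> N :: real
  assumes n: "n > 0" and d: "d > 0" and dn: "d \<le> n" and B: "B > 0" and R: "R > 0" and BR: "B * R \<ge> 1"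
    and \<delta>: "0 < \<delta>" "\<delta> < 1" and N1: "1 \<le> N" and N: "N \<le> (5 * R * B * n * d) ^ d * (3 * real d) ^ d"
  shows "6 * B * sqrt (2 * ln (2 * N / \<delta>) / n) + 9 * B / n
          \<le> 24 * B * sqrt ((d * (30 + ln (n * B * R)) + ln (1 / \<delta>)) / n)"
proof -
  define L where "L = ln (n * B * R)"
  define X where "X = d * (30 + L) + ln (1 / \<delta>)"
  have nBR: "n * B * R \<ge> n" using BR n by (simp add: mult.assoc)
  have n1: "real n \<ge> 1" using n by simp
  have L0: "L \<ge> 0" unfolding L_def using nBR n1 by (intro ln_ge_zero) linarith
  have lnn: "ln n \<le> L" unfolding L_def using nBR n by (intro ln_mono) auto
  have lnd: "ln d \<le> L" using lnn dn d by (meson ln_mono of_nat_0_less_iff of_nat_le_iff order_trans)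
  have lnd1: "ln (1/\<delta>) \<ge> 0" using \<delta> by simp
  have l5: "ln (5::real) \<le> 4" using ln_le_minus_one[of 5] by simp
  have l3: "ln (3::real) \<le> 2" using ln_le_minus_one[of 3] by simp
  have l2: "ln (2::real) \<le> 1" using ln_le_minus_one[of 2] by simp
  have pos1: "5 * R * B * n * d > 0" using R B n d by simp
  have pos2: "(3::real) * d > 0" using d by simp
  have e1: "ln (5 * R * B * n * d) = ln 5 + L + ln d"
    unfolding L_def using R B n d by (simp add: ln_mult mult_ac)
  have e2: "ln (3 * real d) = ln 3 + ln d" using d by (simp add: ln_mult)
  have "ln N \<le> ln ((5 * R * B * n * d) ^ d * (3 * real d) ^ d)"
    using N N1 by (intro ln_mono) auto
  also have "\<dots> = d * ln (5 * R * B * n * d) + d * ln (3 * real d)"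
    using pos1 pos2 R B n d by (simp add: ln_mult ln_realpow distrib_left)
  finally have lnN: "ln N \<le> d * (ln 5 + L + ln d) + d * (ln 3 + ln d)" unfolding e1 e2 .
  have "d * (ln 5 + L + ln d) + d * (ln 3 + ln d) \<le> d * (4 + L + L) + d * (2 + L)"
    using l5 l3 lnd by (intro add_mono mult_left_mono) auto
  with lnN have lnN': "ln N \<le> d * (6 + 3 * L)" by (simp add: algebra_simps)
  have "ln (2 * N / \<delta>) = ln 2 + ln N + ln (1/\<delta>)"
    using N1 \<delta> by (simp add: ln_mult ln_div)
  also have "\<dots> \<le> 1 + d * (6 + 3 * L) + ln (1/\<delta>)" using l2 lnN' by linarith
  also have "\<dots> \<le> 3 * X"
  proof -
    have "1 \<le> real d" using d by simp
    then have "1 + d * (6 + 3 * L) \<le> d * (90 + 3 * L)" using L0 by (simp add: algebra_simps)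
    then show ?thesis unfolding X_def using lnd1 by (simp add: algebra_simps)
  qed
  finally have key: "ln (2 * N / \<delta>) \<le> 3 * X" .
  have X1: "X \<ge> 1"
  proof -
    have "real d * (30 + L) \<ge> 1 * 1" using d L0 by (intro mult_mono) auto
    then show ?thesis unfolding X_def using lnd1 by simp
  qed
  have "sqrt (2 * ln (2 * N / \<delta>) / n) \<le> sqrt (6 * X / n)"
    using key n by (intro real_sqrt_le_mono divide_right_mono) auto
  also have "\<dots> = sqrt 6 * sqrt (X / n)" by (simp add: real_sqrt_mult[symmetric])
  also have "sqrt 6 \<le> sqrt ((5/2::real)\<^sup>2)" by (intro real_sqrt_le_mono) (simp add: power2_eq_square)
  then have "sqrt 6 \<le> (5/2::real)" by simp
  then have "sqrt 6 * sqrt (X / n) \<le> 5/2 * sqrt (X / n)" using X1 by (intro mult_right_mono) auto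
  finally have t1: "sqrt (2 * ln (2 * N / \<delta>) / n) \<le> 5/2 * sqrt (X / n)" .
  have t2: "1 / real n \<le> sqrt (X / n)"
  proof -
    have "1 / real n \<le> 1" using n by simp
    have "(1 / real n)\<^sup>2 \<le> X / n"
    proof -
      have "(1 / real n)\<^sup>2 = 1 / n * (1 / n)" by (simp add: power2_eq_square)
      also have "\<dots> \<le> 1 / n * 1" using n by (intro mult_left_mono) auto
      also have "\<dots> \<le> X / n" using X1 n by (simp add: divide_right_mono)
      finally show ?thesis .
    qed
    then show ?thesis using n by (intro real_le_rsqrt) auto
  qed
  have "6 * B * sqrt (2 * ln (2 * N / \<delta>) / n) + 9 * B / n
      \<le> 6 * B * (5/2 * sqrt (X / n)) + 9 * B * sqrt (X / n)"
    using t1 t2 B by (intro add_mono mult_left_mono) (auto simp: divide_simps)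
  also have "\<dots> = 24 * B * sqrt (X / n)" by (simp add: algebra_simps)
  finally show ?thesis unfolding X_def L_def .
qed


lemma zero_in_grid: "(\<lambda>j. if j < d then 0 else undefined) \<in> grid h M d"
  unfolding grid_def PiE_iff extensional_def
  by (auto intro!: image_eqI[where x=0])

lemma zero_in_Gu: "(\<lambda>j. if j < d then 0 else undefined) \<in> Gu d"
  unfolding Gu_def using zero_in_grid by (auto simp: L2_set_0')

lemma zero_in_Gw: "(\<lambda>j. if j < d then 0 else undefined) \<in> Gw d n B R"
  unfolding Gw_def by (rule zero_in_grid)

context setting
begin

interpretation Dx: prob_space Dx by (rule Dx_prob)
interpretation Ms: prob_space Ms by (rule Ms_prob)

lemma lam_le: assumes d: "d > 0" shows "lam \<le> B\<^sup>2"
proof -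
  have "lam * (\<Sum>i<d. (ev 0 i)\<^sup>2) \<le> (\<integral>x. (dotp d (ev 0) x)\<^sup>2 \<partial>Dx)" by (rule Dx_cov)
  moreover have "(\<Sum>i<d. (ev 0 i)\<^sup>2) = 1"
  proof -
    have "(\<Sum>i<d. (ev 0 i)\<^sup>2) = (\<Sum>i<d. if i = 0 then 1 else 0)"
      by (intro sum.cong) (auto simp: ev_def)
    also have "\<dots> = 1" using d by simp
    finally show ?thesis .
  qed
  moreover have "\<bar>\<integral>x. (dotp d (ev 0) x)\<^sup>2 \<partial>Dx\<bar> \<le> B\<^sup>2"
  proof (rule prob_abs_integral_le[OF Dx_prob])
    show "AE x in Dx. \<bar>(dotp d (ev 0) x)\<^sup>2\<bar> \<le> B\<^sup>2"
      using Dx_AE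
    proof (rule eventually_mono)
      fix x assume x: "nrm d x \<le> B"
      have "\<bar>dotp d (ev 0) x\<bar> \<le> B" using dotp_ev[OF d] abs_comp_le_nrm[OF d, of x] x by simp
      then show "\<bar>(dotp d (ev 0) x)\<^sup>2\<bar> \<le> B\<^sup>2"
        by (metis abs_ge_zero abs_power2 order_trans power2_abs power_mono)
    qed
    show "integrable Dx (\<lambda>x. (dotp d (ev 0) x)\<^sup>2)"
    proof (rule Dx.integrable_const_bound[where B = "B\<^sup>2"])
      show "AE x in Dx. norm ((dotp d (ev 0) x)\<^sup>2) \<le> B\<^sup>2"
        using Dx_AE
      proof (rule eventually_mono)
        fix x assume x: "nrm d x \<le> B"
        have "\<bar>dotp d (ev 0) x\<bar> \<le> B" using dotp_ev[OF d] abs_comp_le_nrm[OF d, of x] x by simp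
        then show "norm ((dotp d (ev 0) x)\<^sup>2) \<le> B\<^sup>2"
          by (metis abs_ge_zero abs_power2 real_norm_def order_trans power2_abs power_mono)
      qed
      show "(\<lambda>x. (dotp d (ev 0) x)\<^sup>2) \<in> borel_measurable Dx" unfolding meas_Dx by measurable
    qed
  qed
  ultimately show ?thesis by simp
qed

lemma gam_le: "2 * (B * R) * \<gamma> \<le> 1"
  by (rule gamma_small[OF gam mult_pos_pos[OF B0 R0]])

lemma big_rhs:
  assumes d: "d > 0" and X: "X \<ge> 1"
  shows "2 * R \<le> 24 * B / (\<gamma>\<^sup>2 * lam) * sqrt X"
proof -
  have gl: "\<gamma>\<^sup>2 * lam > 0" using gam0 lam0 by simp
  have "\<gamma> * (B * R) \<le> 1/2" using gam_le by (simp add: mult_ac)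
  then have "(\<gamma> * (B * R))\<^sup>2 \<le> (1/2)\<^sup>2" using gam0 B0 R0 by (intro power_mono) auto
  then have g2: "\<gamma>\<^sup>2 * B\<^sup>2 * R\<^sup>2 \<le> 1/4" by (simp add: power_mult_distrib mult_ac power2_eq_square)
  have "2 * R * (\<gamma>\<^sup>2 * lam) \<le> 2 * R * (\<gamma>\<^sup>2 * B\<^sup>2)"
    using lam_le[OF d] R0 by (intro mult_left_mono) auto
  also have "2 * R * (\<gamma>\<^sup>2 * B\<^sup>2) = 2 * (\<gamma>\<^sup>2 * B\<^sup>2 * R\<^sup>2) / R"
    using R0 by (simp add: power2_eq_square field_simps)
  also have "\<dots> \<le> 2 * (1/4) / R" using g2 R0 by (intro divide_right_mono) auto
  also have "\<dots> \<le> 24 * B"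
  proof -
    have "1 \<le> B * R" by (rule BR)
    then have "1 / R \<le> B" using R0 by (simp add: field_simps)
    moreover have "1 / (2 * R) \<le> 1 / R" using R0 by (simp add: divide_simps)
    ultimately show ?thesis using B0 by simp
  qed
  finally have "2 * R \<le> 24 * B / (\<gamma>\<^sup>2 * lam)" using gl by (simp add: field_simps)
  also have "\<dots> \<le> 24 * B / (\<gamma>\<^sup>2 * lam) * sqrt X"
  proof -
    have s1: "1 \<le> sqrt X" using X by simp
    have a0: "0 \<le> 24 * B / (\<gamma>\<^sup>2 * lam)" using gl B0 by simp
    show ?thesis using mult_left_mono[OF s1 a0] by simp
  qed
  finally show ?thesis .
qed

end


context setting
begin

interpretation Ms: prob_space Ms by (rule Ms_prob)

lemma card_Gw_le: assumes n: "n > 0" and d: "d > 0"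
  shows "real (card (Gw d n B R)) \<le> (5 * R * B * n * d) ^ d"
proof -
  define M where "M = nat \<lceil>R * B * n * d\<rceil>"
  have RBnd: "R * B * n * d \<ge> 1"
  proof -
    have "R * B \<ge> 1" using BR by (simp add: mult.commute)
    moreover have "real n * real d \<ge> 1" using n d
      by (metis One_nat_def Suc_leI mult_le_mono of_nat_1 of_nat_le_iff of_nat_mult mult_1)
    ultimately have "(R * B) * (real n * real d) \<ge> 1 * 1" by (intro mult_mono) auto
    then show ?thesis by (simp add: mult_ac)
  qed
  have M: "real M \<le> R * B * n * d + 1" unfolding M_def using RBnd by linarith
  have "real (card (Gw d n B R)) \<le> real ((2*M+1)^d)"
    unfolding Gw_def M_def[symmetric] using grid_card by (simp only: of_nat_le_iff)
  also have "\<dots> = (2 * real M + 1) ^ d" by (simp add: add.commute)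
  also have "\<dots> \<le> (5 * R * B * n * d) ^ d"
    using M RBnd by (intro power_mono) auto
  finally show ?thesis .
qed

lemma card_Gu_le: assumes d: "d > 0"
  shows "real (card (Gu d)) \<le> (3 * real d) ^ d"
proof -
  have "card (Gu d) \<le> card (grid (1/d) d d)"
    unfolding Gu_def by (intro card_mono grid_finite) auto
  also have "\<dots> \<le> (2*d+1)^d" by (rule grid_card)
  finally have "real (card (Gu d)) \<le> real ((2*d+1)^d)" by (simp only: of_nat_le_iff)
  also have "\<dots> = (2 * real d + 1) ^ d" by (simp add: add.commute)
  also have "\<dots> \<le> (3 * real d) ^ d" using d by (intro power_mono) auto
  finally show ?thesis .
qed

lemma main_event:
  assumes n: "n > 0" and d: "d > 0" and dn: "d \<le> n" and \<delta>: "0 < \<delta>" "\<delta> < 1"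
  shows "\<exists>E\<in>sets Ms. measure Ms E \<ge> 1 - \<delta> \<and>
    (\<forall>S\<in>E. \<forall>w. nrm d w \<le> R \<and> grad_zero d (emp_risk d n \<sigma> S) w \<longrightarrow>
       nrm d (\<lambda>i. w i - wstar i) \<le> 24 * B / (\<gamma>\<^sup>2 * lam) *
          sqrt ((real d * (30 + ln (real n * B * R)) + ln (1 / \<delta>)) / real n))"
proof -
  define G where "G = Gw d n B R \<times> Gu d"
  define N where "N = real (card G)"
  have Gfin: "finite G" unfolding G_def using Gw_finite Gu_finite by auto
  have Gne: "G \<noteq> {}" unfolding G_def using zero_in_Gw zero_in_Gu by blast
  have N1: "1 \<le> N" unfolding N_def using Gfin Gne
    by (metis One_nat_def Suc_leI card_gt_0_iff of_nat_1 of_nat_le_iff)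
  have Nle: "N \<le> (5 * R * B * n * d) ^ d * (3 * real d) ^ d"
    unfolding N_def G_def card_cartesian_product of_nat_mult
    by (intro mult_mono card_Gw_le card_Gu_le n d) (use R0 B0 in auto)
  define t where "t = 3 * B * sqrt (2 * ln (2 * N / \<delta>) / n)"
  have lnpos: "ln (2 * N / \<delta>) \<ge> 0"
  proof -
    have "2 * N / \<delta> \<ge> 1" using N1 \<delta> by (simp add: field_simps)
    then show ?thesis by simp
  qed
  have t0: "t \<ge> 0" unfolding t_def using B0 lnpos by (intro mult_nonneg_nonneg) auto
  define bad where "bad = (\<lambda>p. {S \<in> space Ms. \<bar>(\<Sum>i<n. phi \<sigma> \<sigma>1 d (fst p) (snd p) (S i)) - n * P (fst p) (snd p)\<bar> \<ge> n * t})"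
  have bad_sets: "bad p \<in> sets Ms" for p
  proof -
    have "(\<lambda>S. phi \<sigma> \<sigma>1 d (fst p) (snd p) (S i)) \<in> borel_measurable Ms" if "i < n" for i
      using that by (intro measurable_compose[OF comp_meas]) (auto simp: meas_D)
    then show ?thesis unfolding bad_def by measurable
  qed
  have bad_le: "measure Ms (bad p) \<le> \<delta> / N" if p: "p \<in> G" for p
  proof -
    have ng: "nrm d (snd p) \<le> 3/2" using p by (auto simp: G_def Gu_def)
    have h: "measure Ms (bad p) \<le> 2 * exp (- (real n * t)\<^sup>2 / (18 * real n * B\<^sup>2))"
      unfolding bad_def using hoeff[OF n ng, of "real n * t" "fst p"] t0 by simp
    have e: "(real n * t)\<^sup>2 / (18 * real n * B\<^sup>2) = ln (2 * N / \<delta>)"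
      unfolding t_def using n B0 lnpos by (simp add: power2_eq_square field_simps)
    have e2: "2 * exp (- ln (2 * N / \<delta>)) = \<delta> / N"
      using N1 \<delta> by (simp add: exp_minus field_simps)
    show ?thesis using h e e2 by (metis minus_divide_left)
  qed
  define A where "A = {S \<in> space Ms. \<forall>i<n. ok (S i)}"
  have A_sets: "A \<in> sets Ms"
  proof -
    have "Measurable.pred Ms (\<lambda>S. ok (S i))" if "i < n" for i
      using that by (intro measurable_compose[OF comp_meas]) (auto simp: meas_D)
    then show ?thesis unfolding A_def by measurable
  qed
  have A1: "measure Ms A = 1"
    unfolding A_def using Ms.prob_Collect_eq_1[OF A_sets[unfolded A_def]] Ms_AE_ok by simp
  define U where "U = (\<Union>p\<in>G. bad p)"
  have U_sets: "U \<in> sets Ms" unfolding U_def using Gfin bad_sets by auto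
  have U_le: "measure Ms U \<le> \<delta>"
  proof -
    have "measure Ms U \<le> (\<Sum>p\<in>G. measure Ms (bad p))"
      unfolding U_def by (rule measure_UNION_le[OF Gfin bad_sets])
    also have "\<dots> \<le> (\<Sum>p\<in>G. \<delta> / N)" by (intro sum_mono bad_le)
    also have "\<dots> = \<delta>" using N1 by (simp add: N_def)
    finally show ?thesis .
  qed
  define E where "E = A - U"
  have E_sets: "E \<in> sets Ms" unfolding E_def using A_sets U_sets by auto
  have E_meas: "measure Ms E \<ge> 1 - \<delta>"
  proof -
    have "measure Ms A \<le> measure Ms (E \<union> U)"
      using E_sets U_sets A_sets by (intro Ms.finite_measure_mono) (auto simp: E_def)
    also have "\<dots> \<le> measure Ms E + measure Ms U" by (rule measure_Un_le[OF E_sets U_sets])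
    finally show ?thesis using A1 U_le by linarith
  qed
  have E_good: "nrm d (\<lambda>i. w i - wstar i) \<le> 24 * B / (\<gamma>\<^sup>2 * lam) *
          sqrt ((real d * (30 + ln (real n * B * R)) + ln (1 / \<delta>)) / real n)"
    if S: "S \<in> E" and w: "nrm d w \<le> R" and gz: "grad_zero d (emp_risk d n \<sigma> S) w" for S w
  proof -
    have SA: "S \<in> A" and SU: "S \<notin> U" using S by (auto simp: E_def)
    have Sok: "nrm d (fst (S i)) \<le> B \<and> -1 \<le> snd (S i) \<and> snd (S i) \<le> 2" if "i < n" for i
      using SA that ok_y[of "S i"] by (auto simp: A_def ok_def)
    have good: "\<bar>(\<Sum>i<n. phi \<sigma> \<sigma>1 d w' g (S i)) / n - P w' g\<bar> < t"
      if "w' \<in> Gw d n B R" "g \<in> Gu d" for w' g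
    proof -
      have "(w', g) \<in> G" using that by (simp add: G_def)
      then have "S \<notin> bad (w', g)" using SU by (auto simp: U_def)
      then have "\<bar>(\<Sum>i<n. phi \<sigma> \<sigma>1 d w' g (S i)) - n * P w' g\<bar> < n * t"
        using SA by (auto simp: bad_def A_def)
      then have "\<bar>((\<Sum>i<n. phi \<sigma> \<sigma>1 d w' g (S i)) - n * P w' g) / n\<bar> < t"
        using n by (simp add: abs_divide divide_less_eq mult.commute)
      moreover have "((\<Sum>i<n. phi \<sigma> \<sigma>1 d w' g (S i)) - n * P w' g) / n =
          (\<Sum>i<n. phi \<sigma> \<sigma>1 d w' g (S i)) / n - P w' g" using n by (simp add: field_simps)
      ultimately show ?thesis by simp
    qed
    have c0: "\<gamma>\<^sup>2 * lam > 0" using gam0 lam0 by simp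
    have "nrm d (\<lambda>i. w i - wstar i) \<le> (2 * t + 9 * B / n) / (\<gamma>\<^sup>2 * lam)"
      by (rule core[where P = P, OF P_lin P_lip P_low c0 n d B0 R0 t0 Sok good w gz]) auto
    also have "\<dots> \<le> (24 * B * sqrt ((d * (30 + ln (n * B * R)) + ln (1 / \<delta>)) / n)) / (\<gamma>\<^sup>2 * lam)"
    proof (rule divide_right_mono)
      have "2 * t = 6 * B * sqrt (2 * ln (2 * N / \<delta>) / n)" by (simp add: t_def)
      then show "2 * t + 9 * B / n \<le> 24 * B * sqrt ((d * (30 + ln (n * B * R)) + ln (1 / \<delta>)) / n)"
        using final_alg[OF n d dn B0 R0 BR \<delta> N1 Nle] by simp
    qed (use c0 in simp)
    finally show ?thesis by simp
  qed
  show ?thesis using E_sets E_meas E_good by blast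
qed

end


lemma final:
  fixes d n :: nat and B R lam \<gamma> \<delta> :: real and \<sigma> :: "real \<Rightarrow> real" and wstar :: "nat \<Rightarrow> real"
    and Dx :: "(nat \<Rightarrow> real) measure" and Ne :: "real measure"
  assumes cov: "covariates_ok d B lam Dx" and wst: "L2_set wstar {..<d} \<le> R" and BR: "B * R \<ge> 1"
    and lk: "link_ok \<sigma> B R \<gamma>" and noise: "noise_ok Ne" and n: "n > 0" and \<delta>: "0 < \<delta>" "\<delta> < 1"
  shows "\<exists>E \<in> sets (sample_measure n (glm_dist d \<sigma> wstar Dx Ne)).
       measure (sample_measure n (glm_dist d \<sigma> wstar Dx Ne)) E \<ge> 1 - \<delta> \<and>
       (\<forall>S\<in>E. \<forall>w::nat \<Rightarrow> real.
          L2_set w {..<d} \<le> R \<and> grad_zero d (emp_risk d n \<sigma> S) w \<longrightarrow>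
          L2_set (\<lambda>i. w i - wstar i) {..<d} \<le>
            24 * B / (\<gamma>\<^sup>2 * lam) *
            sqrt ((real d * (30 + ln (real n * B * R)) + ln (1 / \<delta>)) / real n))"
proof -
  obtain \<sigma>1 \<sigma>2 where s: "strict_mono \<sigma>" "\<forall>t. 0 \<le> \<sigma> t \<and> \<sigma> t \<le> 1" "\<gamma> > 0"
    "\<forall>t. (\<sigma> has_real_derivative \<sigma>1 t) (at t)" "\<forall>t. (\<sigma>1 has_real_derivative \<sigma>2 t) (at t)"
    "\<forall>t. \<bar>\<sigma>1 t\<bar> \<le> 1 \<and> \<bar>\<sigma>2 t\<bar> \<le> 1" "\<forall>t\<in>{-(B*R)..B*R}. \<sigma>1 t \<ge> \<gamma>"
    using lk unfolding link_ok_def by blast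
  interpret setting \<sigma> \<sigma>1 \<sigma>2 d n B R lam \<gamma> wstar Dx Ne
    by unfold_locales (use s cov wst BR noise in auto)
  interpret Ms: prob_space Ms by (rule Ms_prob)
  define RHS where "RHS = 24 * B / (\<gamma>\<^sup>2 * lam) *
            sqrt ((real d * (30 + ln (real n * B * R)) + ln (1 / \<delta>)) / real n)"
  have L0: "ln (real n * B * R) \<ge> 0"
  proof -
    have "real n \<ge> 1" using n by simp
    then have "real n * (B * R) \<ge> 1 * 1" using BR by (intro mult_mono) auto
    then show ?thesis by (simp add: mult.assoc)
  qed
  have ld: "ln (1 / \<delta>) \<ge> 0" using \<delta> by simp
  have triv: "\<exists>E \<in> sets Ms. measure Ms E \<ge> 1 - \<delta> \<and>
       (\<forall>S\<in>E. \<forall>w::nat \<Rightarrow> real. L2_set w {..<d} \<le> R \<and> grad_zero d (emp_risk d n \<sigma> S) w \<longrightarrow>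
          L2_set (\<lambda>i. w i - wstar i) {..<d} \<le> RHS)"
    if H: "\<And>w. L2_set w {..<d} \<le> R \<Longrightarrow> L2_set (\<lambda>i. w i - wstar i) {..<d} \<le> RHS"
  proof (rule bexI[of _ "space Ms"])
    show "space Ms \<in> sets Ms" by simp
    show "1 - \<delta> \<le> measure Ms (space Ms) \<and>
       (\<forall>S\<in>space Ms. \<forall>w::nat \<Rightarrow> real. L2_set w {..<d} \<le> R \<and> grad_zero d (emp_risk d n \<sigma> S) w \<longrightarrow>
          L2_set (\<lambda>i. w i - wstar i) {..<d} \<le> RHS)"
      using H \<delta> by (auto simp: Ms.prob_space)
  qed
  consider "d = 0" | "d > n" | "d > 0 \<and> d \<le> n" by linarith
  then show ?thesis
  proof cases
    case 1
    have "RHS \<ge> 0" unfolding RHS_def using B0 gam0 lam0 L0 ld n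
      by (intro mult_nonneg_nonneg divide_nonneg_pos real_sqrt_ge_zero add_nonneg_nonneg) auto
    then show ?thesis using triv 1 unfolding RHS_def by simp
  next
    case 2
    have X: "(real d * (30 + ln (real n * B * R)) + ln (1 / \<delta>)) / real n \<ge> 1"
    proof -
      have "real d * (30 + ln (real n * B * R)) \<ge> real n * 1"
        using 2 L0 by (intro mult_mono) auto
      then show ?thesis using ld n by (simp add: field_simps)
    qed
    have "L2_set (\<lambda>i. w i - wstar i) {..<d} \<le> RHS" if w: "L2_set w {..<d} \<le> R" for w
    proof -
      have "L2_set (\<lambda>i. w i - wstar i) {..<d} \<le> L2_set w {..<d} + L2_set wstar {..<d}"
        by (rule nrm_diff_le)
      also have "\<dots> \<le> 2 * R" using w wst by simp
      also have "\<dots> \<le> RHS" unfolding RHS_def using big_rhs[OF _ X] 2 by simp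
      finally show ?thesis .
    qed
    then show ?thesis using triv unfolding RHS_def by blast
  next
    case 3
    then show ?thesis using main_event[OF n _ _ \<delta>] by blast
  qed
qed

theorem theorem3p2:
  shows "\<exists>C1>0. \<exists>C2>0. \<forall>(d::nat) (n::nat) (B::real) (R::real) (lam::real) (\<gamma>::real)
      (\<sigma>::real \<Rightarrow> real) (wstar::nat \<Rightarrow> real) (Dx::(nat \<Rightarrow> real) measure) (Ne::real measure) (\<delta>::real).
    covariates_ok d B lam Dx \<and> L2_set wstar {..<d} \<le> R \<and> B * R \<ge> 1 \<and>
    link_ok \<sigma> B R \<gamma> \<and> noise_ok Ne \<and> n > 0 \<and> 0 < \<delta> \<and> \<delta> < 1 \<longrightarrow>
    (\<exists>E \<in> sets (sample_measure n (glm_dist d \<sigma> wstar Dx Ne)).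
       measure (sample_measure n (glm_dist d \<sigma> wstar Dx Ne)) E \<ge> 1 - \<delta> \<and>
       (\<forall>S\<in>E. \<forall>w::nat \<Rightarrow> real.
          L2_set w {..<d} \<le> R \<and> grad_zero d (emp_risk d n \<sigma> S) w \<longrightarrow>
          L2_set (\<lambda>i. w i - wstar i) {..<d} \<le>
            C1 * B / (\<gamma>\<^sup>2 * lam) *
            sqrt ((real d * (C2 + ln (real n * B * R)) + ln (1 / \<delta>)) / real n)))"
  apply (rule exI[of _ "24::real"])
  apply (rule conjI, simp)
  apply (rule exI[of _ "30::real"])
  apply (rule conjI, simp)
  apply (intro allI impI)
  apply (elim conjE)
  apply (rule final; assumption)
  done


end
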